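(* Let $\phi:\mathbb{D}\to\overline{\mathbb{D}}$ be a non-constant analytic function such that the composition operator $C_\phi f=f\circ\phi$ maps $A^+$ into itself. Then $C_\phi:A^+\to A^+$ is compact if and only if $\|\phi\|_\infty=\sup_{z\in\mathbb{D}}|\phi(z)|<1$.
   Context: $\mathbb{D}$ is the open unit disk. $A^+$ is the Wiener algebra of functions $f(z)=\sum_{n\ge0}a_nz^n$ with $\|f\|_{A^+}=\sum_{n\ge0}|a_n|<\infty$ (a commutative unital Banach algebra under pointwise multiplication, with spectrum $\overline{\mathbb{D}}$). *)

theory Defs
  imports "HOL-Analysis.Analysis"
begin

text \<open>Elements of the Wiener algebra A+ are represented by their Taylor coefficient
  sequences a with sum of norm (a n) finite; the associated function is
  z maps to the sum over n of a n * z^n, and the norm is the l1 norm of the coefficients.\<close>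

definition wiener :: "(nat \<Rightarrow> complex) set" where
  "wiener = {a. summable (\<lambda>n. norm (a n))}"

definition wfun :: "(nat \<Rightarrow> complex) \<Rightarrow> complex \<Rightarrow> complex" where
  "wfun a z = (\<Sum>n. a n * z ^ n)"

definition wnorm :: "(nat \<Rightarrow> complex) \<Rightarrow> real" where
  "wnorm a = (\<Sum>n. norm (a n))"

definition comp_image :: "(complex \<Rightarrow> complex) \<Rightarrow> (nat \<Rightarrow> complex) \<Rightarrow> (nat \<Rightarrow> complex) \<Rightarrow> bool" where
  "comp_image \<phi> a b \<longleftrightarrow> b \<in> wiener \<and> (\<forall>z\<in>ball 0 1. wfun b z = wfun a (\<phi> z))"

definition comp_maps_wiener :: "(complex \<Rightarrow> complex) \<Rightarrow> bool" where
  "comp_maps_wiener \<phi> \<longleftrightarrow> (\<forall>a\<in>wiener. \<exists>b. comp_image \<phi> a b)"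

text \<open>C_phi is compact on A+: every bounded sequence is mapped to a sequence having
  a subsequence convergent in the A+ norm (A+ is complete, so this is relative
  compactness of the image of the unit ball).\<close>
definition comp_compact :: "(complex \<Rightarrow> complex) \<Rightarrow> bool" where
  "comp_compact \<phi> \<longleftrightarrow>
     (\<forall>(A :: nat \<Rightarrow> nat \<Rightarrow> complex) (B :: nat \<Rightarrow> nat \<Rightarrow> complex). (\<forall>k. A k \<in> wiener) \<longrightarrow> (\<exists>M. \<forall>k. wnorm (A k) \<le> M) \<longrightarrow>
        (\<forall>k. comp_image \<phi> (A k) (B k)) \<longrightarrow>
        (\<exists>(r :: nat \<Rightarrow> nat) c. strict_mono r \<and> c \<in> wiener \<and>
               (\<lambda>k. wnorm (\<lambda>n. B (r k) n - c n)) \<longlonglongrightarrow> 0))"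

end

theory Submission
  imports Defs "HOL-Complex_Analysis.Complex_Analysis" "HOL-Library.Diagonal_Subsequence"
begin


definition L1 :: "complex fps \<Rightarrow> bool" where
  "L1 f \<longleftrightarrow> summable (\<lambda>n. norm (fps_nth f n))"

definition l1 :: "complex fps \<Rightarrow> real" where
  "l1 f = (\<Sum>n. norm (fps_nth f n))"

lemma l1_nonneg: "L1 f \<Longrightarrow> l1 f \<ge> 0"
  unfolding l1_def L1_def by (rule suminf_nonneg) auto
  
lemma L1_conv_radius:
  assumes "L1 f" shows "fps_conv_radius f \<ge> 1"
proof -
  have "summable (\<lambda>n. fps_nth f n * 1 ^ n)"
    using assms unfolding L1_def by (simp add: summable_norm_cancel)
  from conv_radius_geI[OF this] show ?thesis by (simp add: fps_conv_radius_def one_ereal_def)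
qed

lemma L1_in_radius:
  assumes "L1 f" "norm z < 1" shows "ereal (norm z) < fps_conv_radius f"
  using L1_conv_radius[OF assms(1)] assms(2)
  by (meson ereal_less(3) less_le_trans)

lemma eval_bound:
  assumes "L1 f" "norm z \<le> 1" shows "norm (eval_fps f z) \<le> l1 f"
proof -
  have le: "norm (fps_nth f n * z ^ n) \<le> norm (fps_nth f n)" for n
    using assms(2) by (simp add: norm_mult norm_power mult_left_le power_le_one)
  have s0: "summable (\<lambda>n. norm (fps_nth f n))" using assms(1) unfolding L1_def .
  have s: "summable (\<lambda>n. norm (fps_nth f n * z ^ n))"
    by (rule summable_comparison_test'[OF s0, of 0]) (simp add: le)
  have "norm (eval_fps f z) \<le> (\<Sum>n. norm (fps_nth f n * z ^ n))"
    unfolding eval_fps_def by (rule summable_norm[OF s])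
  also have "\<dots> \<le> l1 f" unfolding l1_def
    by (rule suminf_le[OF le s s0])
  finally show ?thesis .
qed

lemma L1_add: assumes "L1 f" "L1 g" shows "L1 (f + g)" "l1 (f + g) \<le> l1 f + l1 g"
proof -
  have le: "norm (fps_nth (f+g) n) \<le> norm (fps_nth f n) + norm (fps_nth g n)" for n
    by (simp add: norm_triangle_ineq)
  have s: "summable (\<lambda>n. norm (fps_nth f n) + norm (fps_nth g n))"
    using assms unfolding L1_def by (intro summable_add)
  show "L1 (f+g)" unfolding L1_def using le s by (intro summable_comparison_test'[OF s]) auto
  then have "l1 (f + g) \<le> (\<Sum>n. norm (fps_nth f n) + norm (fps_nth g n))" unfolding l1_def
    using s le unfolding L1_def by (intro suminf_le) auto
  then show "l1 (f + g) \<le> l1 f + l1 g" unfolding l1_def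
    using assms unfolding L1_def by (subst (asm) suminf_add[symmetric]) auto
qed

lemma L1_minus: assumes "L1 f" shows "L1 (- f)" "l1 (- f) = l1 f"
  using assms by (simp_all add: L1_def l1_def)

lemma L1_diff: assumes "L1 f" "L1 g" shows "L1 (f - g)" "l1 (f - g) \<le> l1 f + l1 g"
  using L1_add[of f "-g"] L1_minus[of g] assms by simp_all

lemma L1_mult: assumes "L1 f" "L1 g" shows "L1 (f * g)" "l1 (f * g) \<le> l1 f * l1 g"
proof -
  let ?a = "\<lambda>n. norm (fps_nth f n)" and ?b = "\<lambda>n. norm (fps_nth g n)"
  have cs: "(\<lambda>n. \<Sum>i\<le>n. ?a i * ?b (n - i)) sums (suminf ?a * suminf ?b)"
    by (rule Cauchy_product_sums) (use assms in \<open>auto simp: L1_def\<close>)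
  have le: "norm (fps_nth (f*g) n) \<le> (\<Sum>i\<le>n. ?a i * ?b (n - i))" for n
    unfolding fps_mult_nth atLeast0AtMost
    by (rule order_trans[OF norm_sum]) (simp add: norm_mult)
  show "L1 (f*g)" unfolding L1_def
    by (rule summable_comparison_test'[OF sums_summable[OF cs]]) (use le in auto)
  then show "l1 (f * g) \<le> l1 f * l1 g" unfolding l1_def
    using le cs sums_summable[OF cs] unfolding L1_def
    by (metis (no_types, lifting) sums_unique suminf_le)
qed

lemma L1_one: "L1 1" "l1 1 = 1"
proof -
  have "(\<lambda>n. norm (fps_nth (1::complex fps) n)) = (\<lambda>n. if n = 0 then 1 else 0)"
    by auto
  moreover have "(\<lambda>n::nat. if n = 0 then 1 else (0::real)) sums 1"
    using sums_single[of 0 "\<lambda>_. 1::real"] by simp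
  ultimately show "L1 1" "l1 1 = 1" unfolding L1_def l1_def
    by (auto simp: sums_iff)
qed

lemma L1_power: assumes "L1 f" shows "L1 (f ^ n)" "l1 (f ^ n) \<le> l1 f ^ n"
proof -
  have "L1 (f ^ n) \<and> l1 (f ^ n) \<le> l1 f ^ n"
  proof (induction n)
    case 0 then show ?case using L1_one by simp
  next
    case (Suc n)
    then have "L1 (f * f ^ n)" "l1 (f * f^n) \<le> l1 f * l1 (f ^ n)"
      using L1_mult[OF assms] by auto
    moreover have "l1 f * l1 (f ^ n) \<le> l1 f * l1 f ^ n"
      using Suc l1_nonneg[OF assms] by (simp add: mult_left_mono)
    ultimately show ?case by simp
  qed
  then show "L1 (f ^ n)" "l1 (f ^ n) \<le> l1 f ^ n" by auto
qed

lemma L1_cmult: assumes "L1 f" shows "L1 (fps_const c * f)" "l1 (fps_const c * f) = norm c * l1 f"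
  using assms unfolding L1_def l1_def
  by (auto simp: norm_mult summable_mult suminf_mult)

lemma L1_sum: assumes "\<And>k. k \<in> S \<Longrightarrow> L1 (F k)" 
  shows "L1 (\<Sum>k\<in>S. F k)" "l1 (\<Sum>k\<in>S. F k) \<le> (\<Sum>k\<in>S. l1 (F k))"
proof -
  have "L1 (\<Sum>k\<in>S. F k) \<and> l1 (\<Sum>k\<in>S. F k) \<le> (\<Sum>k\<in>S. l1 (F k))"
    using assms
  proof (induction S rule: infinite_finite_induct)
    case (infinite A) then show ?case by (simp add: L1_def l1_def)
  next
    case empty then show ?case by (simp add: L1_def l1_def)
  next
    case (insert x F')
    then show ?case using L1_add[of "F x" "\<Sum>k\<in>F'. F k"] by auto
  qed
  then show "L1 (\<Sum>k\<in>S. F k)" "l1 (\<Sum>k\<in>S. F k) \<le> (\<Sum>k\<in>S. l1 (F k))" by auto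
qed


lemma coeff_bound:
  assumes "L1 f" and bnd: "\<And>z. z \<in> ball 0 1 \<Longrightarrow> norm (eval_fps f z) \<le> K"
  shows "norm (fps_nth f j) \<le> K"
proof -
  have rad: "fps_conv_radius f \<ge> 1" using L1_conv_radius[OF assms(1)] .
  have pos: "fps_conv_radius f > 0" using rad by (metis ereal_less(3) less_le_trans zero_less_one zero_ereal_def one_ereal_def)
  have key: "norm (fps_nth f j) * r ^ j \<le> K" if r: "0 < r" "r < 1" for r
  proof -
    have sub: "cball (0::complex) r \<subseteq> eball 0 (fps_conv_radius f)"
    proof
      fix x :: complex assume "x \<in> cball 0 r"
      then have "norm x < 1" using r by auto
      then show "x \<in> eball 0 (fps_conv_radius f)"
        using rad by (simp add: dist_norm) (metis ereal_less(3) less_le_trans one_ereal_def)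
    qed
    have A: "norm ((deriv ^^ j) (eval_fps f) 0) \<le> fact j * K / r ^ j"
    proof (rule Cauchy_inequality)
      show "eval_fps f holomorphic_on ball 0 r"
        by (rule holomorphic_on_eval_fps) (use sub in auto)
      show "continuous_on (cball 0 r) (eval_fps f)"
        by (rule continuous_on_subset[OF continuous_on_eval_fps sub])
      show "0 < r" by fact
      fix x :: complex assume "norm (0 - x) = r"
      then show "norm (eval_fps f x) \<le> K"
        using bnd[of x] r by auto
    qed
    have Bq: "fps_nth f j = (deriv ^^ j) (eval_fps f) 0 / fact j"
      by (rule fps_nth_conv_deriv[OF pos])
    have "norm (fps_nth f j) = norm ((deriv ^^ j) (eval_fps f) 0) / fact j"
      unfolding Bq by (simp add: norm_divide)
    also have "\<dots> \<le> (fact j * K / r ^ j) / fact j"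
      by (rule divide_right_mono[OF A]) simp
    also have "\<dots> = K / r ^ j" by simp
    finally have "norm (fps_nth f j) \<le> K / r ^ j" .
    then show ?thesis using r by (simp add: field_simps)
  qed
  define r where "r m = 1 - 1 / (real m + 2)" for m
  have r01: "0 < r m" "r m < 1" for m unfolding r_def by (auto simp: field_simps)
  have "r \<longlonglongrightarrow> 1 - 0" unfolding r_def
    by (intro tendsto_diff tendsto_const) real_asymp
  then have "(\<lambda>m. norm (fps_nth f j) * r m ^ j) \<longlonglongrightarrow> norm (fps_nth f j) * 1 ^ j"
    by (intro tendsto_intros) simp
  then have "(\<lambda>m. norm (fps_nth f j) * r m ^ j) \<longlonglongrightarrow> norm (fps_nth f j)" by simp
  then show ?thesis
    by (rule LIMSEQ_le_const2) (use key r01 in auto)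
qed

lemma supp_mult:
  assumes "\<And>n. n > a \<Longrightarrow> fps_nth f n = 0" "\<And>n. n > b \<Longrightarrow> fps_nth g n = 0" "n > a + b"
  shows "fps_nth (f * g) n = (0::complex)"
  unfolding fps_mult_nth
proof (rule sum.neutral, rule ballI)
  fix i assume "i \<in> {0..n}"
  show "fps_nth f i * fps_nth g (n - i) = 0"
  proof (cases "i > a")
    case True then show ?thesis using assms(1) by simp
  next
    case False then have "n - i > b" using assms(3) by linarith
    then show ?thesis using assms(2) by simp
  qed
qed

lemma supp_power:
  assumes "\<And>n. n > a \<Longrightarrow> fps_nth f n = (0::complex)"
  shows "n > k * a \<Longrightarrow> fps_nth (f ^ k) n = 0"
proof (induction k arbitrary: n)
  case 0 then show ?case by simp
next
  case (Suc k)
  show ?case unfolding power_Suc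
    by (rule supp_mult[of a _ "k * a"]) (use assms Suc in auto)
qed

lemma finsupp_l1:
  assumes "\<And>n. n > D \<Longrightarrow> fps_nth f n = 0" "\<And>n. norm (fps_nth f n) \<le> K"
  shows "L1 f" "l1 f \<le> (real D + 1) * K"
proof -
  have s: "(\<lambda>n. norm (fps_nth f n)) sums (\<Sum>n\<in>{..D}. norm (fps_nth f n))"
    by (rule sums_finite) (use assms(1) in auto)
  then show "L1 f" unfolding L1_def by (rule sums_summable)
  have "l1 f = (\<Sum>n\<in>{..D}. norm (fps_nth f n))" unfolding l1_def using s by (rule sums_unique[symmetric])
  also have "\<dots> \<le> (\<Sum>n\<in>{..D}. K)" by (rule sum_mono) (rule assms(2))
  finally show "l1 f \<le> (real D + 1) * K" by (simp add: add.commute)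
qed


lemma L1_iff_summable: "L1 f \<longleftrightarrow> summable (\<lambda>n. norm (fps_nth f n))" by (simp add: L1_def)

lemma powers_to_zero:
  assumes P: "L1 P" and bnd: "\<And>z. z \<in> ball 0 1 \<Longrightarrow> norm (eval_fps P z) \<le> \<rho>" and "\<rho> < 1"
  shows "(\<lambda>n. l1 (P ^ n)) \<longlonglongrightarrow> 0"
proof -
  have \<rho>0: "\<rho> \<ge> 0" using bnd[of 0] by (rule order_trans[OF norm_ge_zero]) simp
  define \<epsilon> where "\<epsilon> = (1 - \<rho>) / 4"
  have \<epsilon>0: "\<epsilon> > 0" using \<open>\<rho> < 1\<close> by (simp add: \<epsilon>_def)
  have sP: "summable (\<lambda>n. norm (fps_nth P n))" using P by (simp add: L1_def)
  obtain N where N: "\<And>n. n \<ge> N \<Longrightarrow> norm (\<Sum>i. norm (fps_nth P (i + n))) < \<epsilon>"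
    using suminf_exist_split[OF \<epsilon>0 sP] by blast
  define Q where "Q = Abs_fps (\<lambda>n. if n < N then fps_nth P n else 0)"
  define R where "R = P - Q"
  have Qn: "fps_nth Q n = (if n < N then fps_nth P n else 0)" for n by (simp add: Q_def)
  have Rn: "fps_nth R n = (if n < N then 0 else fps_nth P n)" for n by (simp add: R_def Qn)
  have QR: "P = Q + R" by (simp add: R_def)
  have L1Q: "L1 Q" 
    unfolding L1_def by (rule summable_comparison_test'[OF sP, of 0]) (simp add: Qn)
  have L1R: "L1 R" 
    unfolding L1_def by (rule summable_comparison_test'[OF sP, of 0]) (simp add: Rn)
  have "l1 R = (\<Sum>n. norm (fps_nth R (n + N))) + (\<Sum>i<N. norm (fps_nth R i))"
    unfolding l1_def using L1R unfolding L1_def by (rule suminf_split_initial_segment)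
  also have "\<dots> = (\<Sum>n. norm (fps_nth P (n + N)))" by (simp add: Rn)
  also have "\<dots> \<le> \<epsilon>" using N[of N] by simp
  finally have lR: "l1 R \<le> \<epsilon>" .
  have evQ: "norm (eval_fps Q z) \<le> \<rho> + \<epsilon>" if z: "z \<in> ball 0 1" for z
  proof -
    have nz: "norm z < 1" using z by simp
    have "eval_fps Q z = eval_fps P z - eval_fps R z"
      using eval_fps_diff[of z P R] L1_in_radius[OF P nz] L1_in_radius[OF L1R nz]
      by (simp add: R_def)
    then have "norm (eval_fps Q z) \<le> norm (eval_fps P z) + norm (eval_fps R z)"
      by (simp add: norm_triangle_ineq4)
    also have "\<dots> \<le> \<rho> + \<epsilon>"
      using bnd[OF z] eval_bound[OF L1R, of z] nz lR by simp
    finally show ?thesis .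
  qed
  have suppQ: "fps_nth Q n = 0" if "n > N" for n using that by (simp add: Qn)
  have lQk: "l1 (Q ^ k) \<le> (real k * real N + 1) * (\<rho> + \<epsilon>) ^ k" for k
  proof -
    have cb: "norm (fps_nth (Q ^ k) n) \<le> (\<rho> + \<epsilon>) ^ k" for n
    proof (rule coeff_bound)
      show "L1 (Q ^ k)" using L1_power[OF L1Q] by simp
      fix z :: complex assume z: "z \<in> ball 0 1"
      then have "norm z < 1" by simp
      then have "eval_fps (Q ^ k) z = eval_fps Q z ^ k"
        using eval_fps_power L1_in_radius[OF L1Q] by blast
      then show "norm (eval_fps (Q ^ k) z) \<le> (\<rho> + \<epsilon>) ^ k"
        using evQ[OF z] by (simp add: norm_power power_mono)
    qed
    have "l1 (Q ^ k) \<le> (real (k * N) + 1) * (\<rho> + \<epsilon>) ^ k"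
      by (rule finsupp_l1(2)[OF supp_power[of N Q] cb]) (use suppQ in auto)
    then show ?thesis by simp
  qed
  have lRj: "l1 (R ^ j) \<le> \<epsilon> ^ j" for j
    using L1_power(2)[OF L1R, of j] power_mono[OF lR l1_nonneg[OF L1R], of j] by linarith
  define q where "q = \<rho> + 2 * \<epsilon>"
  have q1: "q < 1" "q \<ge> 0" using \<rho>0 \<epsilon>0 \<open>\<rho> < 1\<close> by (auto simp: q_def \<epsilon>_def field_simps)
  have main: "l1 (P ^ n) \<le> (real n * real N + 1) * q ^ n" for n
  proof -
    let ?T = "\<lambda>k. fps_const (of_nat (n choose k)) * Q ^ k * R ^ (n - k)"
    have "P ^ n = (\<Sum>k\<le>n. ?T k)"
      unfolding QR binomial_ring by (simp add: fps_of_nat)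
    moreover have LT: "L1 (?T k)" "l1 (?T k) \<le> (real n * real N + 1) * (real (n choose k) * (\<rho> + \<epsilon>) ^ k * \<epsilon> ^ (n - k))" 
      if k: "k \<le> n" for k
    proof -
      have L1a: "L1 (Q ^ k * R ^ (n - k))" using L1_mult L1_power L1Q L1R by blast
      have "?T k = fps_const (of_nat (n choose k)) * (Q ^ k * R ^ (n - k))" by (simp add: mult.assoc)
      then have eq: "l1 (?T k) = real (n choose k) * l1 (Q ^ k * R ^ (n - k))"
        using L1_cmult(2)[OF L1a, of "of_nat (n choose k)"] by (simp only:) simp
      show "L1 (?T k)" using L1_cmult(1)[OF L1a, of "of_nat (n choose k)"] by (simp add: mult.assoc)
      have "l1 (Q ^ k * R ^ (n - k)) \<le> l1 (Q ^ k) * l1 (R ^ (n - k))"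
        using L1_mult(2) L1_power(1) L1Q L1R by blast
      also have "\<dots> \<le> ((real k * real N + 1) * (\<rho> + \<epsilon>) ^ k) * \<epsilon> ^ (n - k)"
        by (rule mult_mono[OF lQk lRj]) (use l1_nonneg L1_power(1)[OF L1R] \<rho>0 \<epsilon>0 in auto)
      also have "\<dots> \<le> ((real n * real N + 1) * (\<rho> + \<epsilon>) ^ k) * \<epsilon> ^ (n - k)"
        using k \<rho>0 \<epsilon>0 by (intro mult_right_mono mult_mono) (auto intro: mult_right_mono)
      finally have "real (n choose k) * l1 (Q ^ k * R ^ (n - k)) \<le> real (n choose k) * (((real n * real N + 1) * (\<rho> + \<epsilon>) ^ k) * \<epsilon> ^ (n - k))"
        by (rule mult_left_mono) simp
      then show "l1 (?T k) \<le> (real n * real N + 1) * (real (n choose k) * (\<rho> + \<epsilon>) ^ k * \<epsilon> ^ (n - k))"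
        unfolding eq by (simp add: mult_ac)
    qed
    ultimately have "l1 (P ^ n) \<le> (\<Sum>k\<le>n. l1 (?T k))"
      using L1_sum(2)[of "{..n}" ?T] by simp
    also have "\<dots> \<le> (\<Sum>k\<le>n. (real n * real N + 1) * (real (n choose k) * (\<rho> + \<epsilon>) ^ k * \<epsilon> ^ (n - k)))"
      by (rule sum_mono) (use LT in auto)
    also have "\<dots> = (real n * real N + 1) * ((\<rho> + \<epsilon>) + \<epsilon>) ^ n"
      unfolding binomial_ring[of "\<rho> + \<epsilon>" \<epsilon> n] sum_distrib_left by (simp add: mult_ac)
    also have "\<dots> = (real n * real N + 1) * q ^ n" by (simp add: q_def add.commute)
    finally show ?thesis .
  qed
  have lim: "(\<lambda>n. (real n * real N + 1) * q ^ n) \<longlonglongrightarrow> 0"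
  proof -
    have "(\<lambda>n. real N * (of_nat n * q ^ n) + q ^ n) \<longlonglongrightarrow> real N * 0 + 0"
      by (intro tendsto_intros powser_times_n_limit_0 LIMSEQ_power_zero) (use q1 in auto)
    then show ?thesis by (simp add: algebra_simps)
  qed
  show ?thesis
  proof (rule tendsto_sandwich[OF _ _ tendsto_const lim])
    show "\<forall>\<^sub>F n in sequentially. 0 \<le> l1 (P ^ n)" using l1_nonneg L1_power(1)[OF P] by auto
    show "\<forall>\<^sub>F n in sequentially. l1 (P ^ n) \<le> (real n * real N + 1) * q ^ n" using main by auto
  qed
qed



lemma infsum_suminf':
  fixes f :: "nat \<Rightarrow> 'a::banach"
  assumes "summable (\<lambda>n. norm (f n))"
  shows "infsum f UNIV = suminf f"
  using norm_summable_imp_has_sum[OF assms summable_sums[OF summable_norm_cancel[OF assms]]]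
  by (rule infsumI)

lemma abs_summable_on_nat_imp:
  fixes f :: "nat \<Rightarrow> 'a::banach"
  assumes "(\<lambda>n. norm (f n)) summable_on UNIV" shows "summable (\<lambda>n. norm (f n))"
  using summable_on_imp_summable[OF assms] .

lemma summable_imp_abs_summable_on:
  fixes f :: "nat \<Rightarrow> 'a::banach"
  assumes "summable (\<lambda>n. norm (f n))" shows "(\<lambda>n. norm (f n)) summable_on UNIV"
  using norm_summable_imp_summable_on[of "\<lambda>n. norm (f n)"] assms by simp

lemma double_series:
  fixes g :: "nat \<Rightarrow> nat \<Rightarrow> 'a::banach"
  assumes s1: "\<And>n. summable (\<lambda>m. norm (g n m))"
      and s2: "summable (\<lambda>n. \<Sum>m. norm (g n m))"
  shows "\<And>m. summable (\<lambda>n. norm (g n m))"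
    and "summable (\<lambda>m. \<Sum>n. norm (g n m))"
    and "summable (\<lambda>m. norm (\<Sum>n. g n m))"
    and "(\<Sum>m. \<Sum>n. g n m) = (\<Sum>n. \<Sum>m. g n m)"
proof -
  let ?G = "\<lambda>(n, m). g n m"
  have inner: "(\<lambda>m. norm (?G (n, m))) summable_on UNIV" for n
    using summable_imp_abs_summable_on[OF s1[of n]] by simp
  have eqi: "infsum (\<lambda>m. norm (?G (n, m))) UNIV = (\<Sum>m. norm (g n m))" for n
    using infsum_suminf'[of "\<lambda>m. norm (g n m)"] s1[of n] by simp
  have outer: "(\<lambda>n. norm (infsum (\<lambda>m. norm (?G (n, m))) UNIV)) summable_on UNIV"
    unfolding eqi using summable_imp_abs_summable_on[of "\<lambda>n. \<Sum>m. norm (g n m)"] s2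
    by (simp add: suminf_nonneg s1)
  have absG: "(\<lambda>p. norm (?G p)) summable_on (UNIV \<times> UNIV)"
    using Infinite_Sum.abs_summable_on_Sigma_iff[where f="?G" and A=UNIV and B="\<lambda>_. UNIV"] inner outer by blast
  let ?H = "\<lambda>(m, n). g n m"
  have absH: "(\<lambda>p. norm (?H p)) summable_on (UNIV \<times> UNIV)"
    using absG summable_on_swap[of "\<lambda>p. norm (?G p)" UNIV UNIV]
    by (simp add: case_prod_unfold)
  have H2: "(\<forall>m\<in>UNIV. (\<lambda>n. norm (?H (m, n))) summable_on UNIV) \<and>
            ((\<lambda>m. norm (infsum (\<lambda>n. norm (?H (m, n))) UNIV)) summable_on UNIV)"
    using Infinite_Sum.abs_summable_on_Sigma_iff[where f="?H" and A=UNIV and B="\<lambda>_. UNIV"] absH by blast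
  show a: "summable (\<lambda>n. norm (g n m))" for m
    using H2 abs_summable_on_nat_imp[of "\<lambda>n. g n m"] by simp
  have eqj: "infsum (\<lambda>n. norm (?H (m, n))) UNIV = (\<Sum>n. norm (g n m))" for m
    using infsum_suminf'[of "\<lambda>n. norm (g n m)"] a[of m] by simp
  show b: "summable (\<lambda>m. \<Sum>n. norm (g n m))"
    using H2 abs_summable_on_nat_imp[of "\<lambda>m. infsum (\<lambda>n. norm (?H (m, n))) UNIV"]
    unfolding eqj by (simp add: suminf_nonneg a)
  show c: "summable (\<lambda>m. norm (\<Sum>n. g n m))"
    by (rule summable_comparison_test'[OF b, of 0]) (simp add: summable_norm a)
  have c2: "summable (\<lambda>n. norm (\<Sum>m. g n m))"
    by (rule summable_comparison_test'[OF s2, of 0]) (simp add: summable_norm s1)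
  have "infsum (\<lambda>n. infsum (\<lambda>m. g n m) UNIV) UNIV = infsum (\<lambda>m. infsum (\<lambda>n. g n m) UNIV) UNIV"
    by (rule infsum_swap_banach) (use abs_summable_summable[OF absG] in simp)
  moreover have "infsum (\<lambda>m. g n m) UNIV = (\<Sum>m. g n m)" for n
    by (rule infsum_suminf'[OF s1])
  moreover have "infsum (\<lambda>n. g n m) UNIV = (\<Sum>n. g n m)" for m
    by (rule infsum_suminf'[OF a])
  ultimately have "infsum (\<lambda>n. \<Sum>m. g n m) UNIV = infsum (\<lambda>m. \<Sum>n. g n m) UNIV" by simp
  then show "(\<Sum>m. \<Sum>n. g n m) = (\<Sum>n. \<Sum>m. g n m)"
    using infsum_suminf'[OF c] infsum_suminf'[OF c2] by simp
qed



lemma wfun_eval: "wfun a z = eval_fps (Abs_fps a) z"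
  by (simp add: wfun_def eval_fps_def)

lemma wiener_L1: "a \<in> wiener \<longleftrightarrow> L1 (Abs_fps a)"
  by (simp add: wiener_def L1_def)

lemma wnorm_l1: "wnorm a = l1 (Abs_fps a)"
  by (simp add: wnorm_def l1_def)

lemma wiener_unique:
  assumes "a \<in> wiener" "b \<in> wiener" "\<And>z. z \<in> ball 0 1 \<Longrightarrow> wfun a z = wfun b z"
  shows "a = b"
proof
  fix j
  define F where "F = Abs_fps (\<lambda>n. a n - b n)"
  have sa: "summable (\<lambda>n. norm (a n))" using assms(1) by (simp add: wiener_def)
  have sb: "summable (\<lambda>n. norm (b n))" using assms(2) by (simp add: wiener_def)
  have "summable (\<lambda>n. norm (a n - b n))"
    by (rule summable_comparison_test'[OF summable_add[OF sa sb], of 0]) (simp add: norm_triangle_ineq4)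
  then have LF: "L1 F" by (simp add: F_def L1_def)
  have "norm (fps_nth F j) \<le> 0"
  proof (rule coeff_bound[OF LF])
    fix z :: complex assume z: "z \<in> ball 0 1"
    then have nz: "norm z < 1" by simp
    have "F = Abs_fps a - Abs_fps b" by (simp add: F_def fps_eq_iff)
    then have "eval_fps F z = eval_fps (Abs_fps a - Abs_fps b) z" by simp
    also have "\<dots> = wfun a z - wfun b z"
      using eval_fps_diff[of z "Abs_fps a" "Abs_fps b"] L1_in_radius[OF _ nz] assms(1,2)
      by (simp add: wiener_L1 wfun_eval)
    finally show "norm (eval_fps F z) \<le> 0" using assms(3)[OF z] by simp
  qed
  then show "a j = b j" by (simp add: F_def)
qed

definition T :: "complex fps \<Rightarrow> (nat \<Rightarrow> complex) \<Rightarrow> nat \<Rightarrow> complex" where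
  "T P a m = (\<Sum>n. a n * fps_nth (P ^ n) m)"

lemma T_props:
  assumes P: "L1 P" and S: "\<And>n. l1 (P ^ n) \<le> S" and a: "a \<in> wiener"
  shows "T P a \<in> wiener"
    and "summable (\<lambda>n. norm (a n) * l1 (P ^ n))"
    and "wnorm (T P a) \<le> (\<Sum>n. norm (a n) * l1 (P ^ n))"
    and "\<And>z. z \<in> ball 0 1 \<Longrightarrow> wfun (T P a) z = wfun a (eval_fps P z)"
proof -
  have LPn: "L1 (P ^ n)" for n using L1_power(1)[OF P] .
  have sa: "summable (\<lambda>n. norm (a n))" using a by (simp add: wiener_def)
  define g where "g n m = a n * fps_nth (P ^ n) m" for n m
  have s1: "summable (\<lambda>m. norm (g n m))" for n
    unfolding g_def norm_mult using LPn[of n] unfolding L1_def by (rule summable_mult)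
  have e1: "(\<Sum>m. norm (g n m)) = norm (a n) * l1 (P ^ n)" for n
    unfolding g_def norm_mult l1_def using LPn[of n] unfolding L1_def by (rule suminf_mult)
  show s2: "summable (\<lambda>n. norm (a n) * l1 (P ^ n))"
    by (rule summable_comparison_test'[OF summable_mult2[OF sa, of S], of 0])
       (use S l1_nonneg[OF LPn] in \<open>auto intro: mult_left_mono\<close>)
  have s2': "summable (\<lambda>n. \<Sum>m. norm (g n m))" unfolding e1 by (rule s2)
  note ds = double_series[of g, OF s1 s2']
  have Tg: "T P a m = (\<Sum>n. g n m)" for m by (simp add: T_def g_def)
  show "T P a \<in> wiener" unfolding wiener_def using ds(3) by (simp add: Tg)
  have "wnorm (T P a) = (\<Sum>m. norm (\<Sum>n. g n m))" by (simp add: wnorm_def Tg)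
  also have "\<dots> \<le> (\<Sum>m. \<Sum>n. norm (g n m))"
    by (rule suminf_le[OF _ ds(3) ds(2)]) (rule summable_norm[OF ds(1)])
  also have "\<dots> = (\<Sum>n. \<Sum>m. norm (g n m))"
    using double_series(4)[of "\<lambda>n m. norm (g n m)"] s1 s2' by simp
  also have "\<dots> = (\<Sum>n. norm (a n) * l1 (P ^ n))" by (simp add: e1)
  finally show "wnorm (T P a) \<le> (\<Sum>n. norm (a n) * l1 (P ^ n))" .
  fix z :: complex assume z: "z \<in> ball 0 1"
  then have nz: "norm z < 1" by simp
  define h where "h n m = g n m * z ^ m" for n m
  have hle: "norm (h n m) \<le> norm (g n m)" for n m
    unfolding h_def norm_mult norm_power using nz
    by (simp add: mult_left_le power_le_one)
  have t1: "summable (\<lambda>m. norm (h n m))" for n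
    by (rule summable_comparison_test'[OF s1[of n], of 0]) (simp add: hle)
  have t2: "summable (\<lambda>n. \<Sum>m. norm (h n m))"
    by (rule summable_comparison_test'[OF s2', of 0])
       (simp add: suminf_nonneg t1 suminf_le hle s1)
  have "wfun (T P a) z = (\<Sum>m. (\<Sum>n. g n m) * z ^ m)" by (simp add: wfun_def Tg)
  also have "\<dots> = (\<Sum>m. \<Sum>n. h n m)"
    unfolding h_def by (intro suminf_cong) (rule suminf_mult2[OF summable_norm_cancel[OF ds(1)]])
  also have "\<dots> = (\<Sum>n. \<Sum>m. h n m)" by (rule double_series(4)[OF t1 t2])
  also have "\<dots> = (\<Sum>n. a n * eval_fps (P ^ n) z)"
  proof (rule suminf_cong)
    fix n
    have "(\<Sum>m. h n m) = (\<Sum>m. a n * (fps_nth (P ^ n) m * z ^ m))"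
      by (simp add: h_def g_def mult.assoc)
    also have "\<dots> = a n * (\<Sum>m. fps_nth (P ^ n) m * z ^ m)"
      by (rule suminf_mult[OF summable_fps]) (use L1_in_radius[OF LPn nz] in simp)
    finally show "(\<Sum>m. h n m) = a n * eval_fps (P ^ n) z" by (simp add: eval_fps_def)
  qed
  also have "\<dots> = (\<Sum>n. a n * eval_fps P z ^ n)"
    using eval_fps_power[OF L1_in_radius[OF P nz]] by simp
  also have "\<dots> = wfun a (eval_fps P z)" by (simp add: wfun_def)
  finally show "wfun (T P a) z = wfun a (eval_fps P z)" .
qed

lemma T_diff:
  assumes P: "L1 P" and S: "\<And>n. l1 (P ^ n) \<le> S" and a: "a \<in> wiener" and b: "b \<in> wiener"
  shows "T P a m - T P b m = T P (\<lambda>n. a n - b n) m"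
proof -
  have LPn: "L1 (P ^ n)" for n using L1_power(1)[OF P] .
  have cb: "norm (fps_nth (P ^ n) m) \<le> S" for n
  proof -
    have "norm (fps_nth (P ^ n) m) \<le> l1 (P ^ n)"
      using LPn[of n] sum_le_suminf[of "\<lambda>k. norm (fps_nth (P ^ n) k)" "{m}"] unfolding L1_def l1_def
      by simp
    then show ?thesis using S[of n] by linarith
  qed
  have sm: "summable (\<lambda>n. c n * fps_nth (P ^ n) m)" if c: "c \<in> wiener" for c
  proof -
    have sc: "summable (\<lambda>n. norm (c n))" using c by (simp add: wiener_def)
    show ?thesis
      by (rule summable_norm_cancel, rule summable_comparison_test'[OF summable_mult2[OF sc, of S], of 0])
         (simp add: norm_mult mult_left_mono cb)
  qed
  show ?thesis unfolding T_def
    using suminf_diff[OF sm[OF a] sm[OF b]] by (simp add: algebra_simps)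
qed



lemma diagonal_conv:
  fixes A :: "nat \<Rightarrow> nat \<Rightarrow> complex"
  assumes bdd: "\<And>k n. norm (A k n) \<le> M"
  shows "\<exists>r \<alpha>. strict_mono r \<and> (\<forall>n. (\<lambda>k. A (r k) n) \<longlonglongrightarrow> \<alpha> n)"
proof -
  let ?P = "\<lambda>n. \<lambda>s. convergent (\<lambda>k. A (s k) n)"
  interpret nat: subseqs ?P
  proof (unfold convergent_def, unfold subseqs_def, auto)
    fix n :: nat and s :: "nat \<Rightarrow> nat" assume s: "strict_mono s"
    have "bounded (range (\<lambda>k. A (s k) n))"
      unfolding bounded_iff using bdd by blast
    then obtain l s' where "strict_mono s'" "((\<lambda>k. A (s k) n) \<circ> s') \<longlonglongrightarrow> l"
      using bounded_imp_convergent_subsequence by blast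
    thus "\<exists>s'. strict_mono (s'::nat\<Rightarrow>nat) \<and> (\<exists>l. (\<lambda>k. A (s (s' k)) n) \<longlonglongrightarrow> l)"
      by (auto simp: comp_def)
  qed
  define d where "d = nat.diagseq"
  have subseq: "strict_mono d"
    unfolding d_def using nat.subseq_diagseq by auto
  have cnv: "?P n d" for n
  proof -
    have Pn_seqseq: "?P n (nat.seqseq (Suc n))"
      by (rule nat.seqseq_holds)
    have 1: "(\<lambda>k. A ((nat.seqseq (Suc n) \<circ> (\<lambda>k. nat.fold_reduce (Suc n) k
      (Suc n + k))) k) n) = (\<lambda>k. A (nat.seqseq (Suc n) k) n) \<circ>
      (\<lambda>k. nat.fold_reduce (Suc n) k (Suc n + k))"
      by auto
    have 2: "?P n (d \<circ> ((+) (Suc n)))"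
      unfolding d_def nat.diagseq_seqseq 1
      by (intro convergent_subseq_convergent Pn_seqseq nat.subseq_diagonal_rest)
    then obtain L where 3: "(\<lambda>na. A (d (na + Suc n)) n) \<longlonglongrightarrow> L"
      by (auto simp: add.commute dest: convergentD)
    then have "(\<lambda>k. A (d k) n) \<longlonglongrightarrow> L"
      by (rule LIMSEQ_offset)
    then show ?thesis
      by (auto simp: convergent_def)
  qed
  show ?thesis
    using subseq cnv by (intro exI[of _ d] exI[of _ "\<lambda>n. lim (\<lambda>k. A (d k) n)"])
      (auto simp: convergent_LIMSEQ_iff)
qed

lemma coord_le_wnorm: "a \<in> wiener \<Longrightarrow> norm (a n) \<le> wnorm a"
  using sum_le_suminf[of "\<lambda>k. norm (a k)" "{n}"] by (simp add: wiener_def wnorm_def)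

lemma wnorm_nonneg: "a \<in> wiener \<Longrightarrow> 0 \<le> wnorm a"
  by (simp add: wiener_def wnorm_def suminf_nonneg)

lemma wiener_diff: "a \<in> wiener \<Longrightarrow> b \<in> wiener \<Longrightarrow> (\<lambda>n. a n - b n) \<in> wiener"
  unfolding wiener_def
  by (auto intro!: summable_comparison_test'[OF summable_add, of "\<lambda>n. norm (a n)" "\<lambda>n. norm (b n)" 0]
           simp: norm_triangle_ineq4)

lemma wfun_diff: "a \<in> wiener \<Longrightarrow> b \<in> wiener \<Longrightarrow> norm z < 1 \<Longrightarrow> wfun (\<lambda>n. a n - b n) z = wfun a z - wfun b z"
proof -
  assume a: "a \<in> wiener" and b: "b \<in> wiener" and z: "norm z < 1"
  have "Abs_fps (\<lambda>n. a n - b n) = Abs_fps a - Abs_fps b" by (simp add: fps_eq_iff)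
  then show ?thesis
    using eval_fps_diff[of z "Abs_fps a" "Abs_fps b"] L1_in_radius[of _ z] a b z
    by (simp add: wiener_L1 wfun_eval)
qed

lemma wfun_bound: "a \<in> wiener \<Longrightarrow> norm z < 1 \<Longrightarrow> norm (wfun a z) \<le> wnorm a"
  using eval_bound[of "Abs_fps a" z] by (simp add: wiener_L1 wfun_eval wnorm_l1)

lemma wfun_single: "wfun (\<lambda>n. if n = k then 1 else 0) z = z ^ k"
proof -
  have "(\<lambda>n. (if n = k then 1 else 0) * z ^ n) = (\<lambda>n. if n = k then z ^ k else 0)" by auto
  moreover have "(\<lambda>n::nat. if n = k then z ^ k else 0) sums z ^ k" by (rule sums_single)
  ultimately show ?thesis unfolding wfun_def by (simp add: sums_iff)
qed

lemma single_wiener: "(\<lambda>n. if n = k then (1::complex) else 0) \<in> wiener" "wnorm (\<lambda>n. if n = k then (1::complex) else 0) = 1"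
proof -
  have "(\<lambda>n. norm (if n = k then (1::complex) else 0)) = (\<lambda>n. if n = k then 1 else 0)" by auto
  moreover have "(\<lambda>n::nat. if n = k then (1::real) else 0) sums 1" using sums_single[of k "\<lambda>_. 1::real"] by simp
  ultimately show "(\<lambda>n. if n = k then (1::complex) else 0) \<in> wiener" "wnorm (\<lambda>n. if n = k then (1::complex) else 0) = 1"
    by (auto simp: wiener_def wnorm_def sums_iff)
qed



lemma wnorm_diff_le: "a \<in> wiener \<Longrightarrow> b \<in> wiener \<Longrightarrow> wnorm (\<lambda>n. a n - b n) \<le> wnorm a + wnorm b"
proof -
  assume a: "a \<in> wiener" and b: "b \<in> wiener"
  have "Abs_fps (\<lambda>n. a n - b n) = Abs_fps a - Abs_fps b" by (simp add: fps_eq_iff)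
  then show ?thesis using L1_diff(2)[of "Abs_fps a" "Abs_fps b"] a b
    by (simp add: wnorm_l1 wiener_L1)
qed

theorem proposition1:
  fixes \<phi> :: "complex \<Rightarrow> complex"
  assumes "\<phi> holomorphic_on ball 0 1"
    and "\<phi> ` ball 0 1 \<subseteq> cball 0 1"
    and "\<not> (\<exists>c. \<forall>z\<in>ball 0 1. \<phi> z = c)"
    and "comp_maps_wiener \<phi>"
  shows "comp_compact \<phi> \<longleftrightarrow> (SUP z\<in>ball 0 1. norm (\<phi> z)) < 1"
proof -
  note hol = assms(1) and img = assms(2) and nc = assms(3) and cm = assms(4)
  have opn: "open (\<phi> ` ball 0 1)"
    by (rule open_mapping_thm[OF hol]) (use nc in \<open>auto simp: constant_on_def\<close>)
  have "\<phi> ` ball 0 1 \<subseteq> interior (cball 0 1)" using img opn interior_maximal by blast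
  then have sub: "\<phi> ` ball 0 1 \<subseteq> ball 0 1" by simp
  have inball: "\<phi> z \<in> ball 0 1" if "z \<in> ball 0 1" for z
    using sub that by (meson image_subset_iff)
  have bddA: "bdd_above ((\<lambda>z. norm (\<phi> z)) ` ball 0 1)"
    using inball by (intro bdd_aboveI[of _ 1]) fastforce
  define s where "s = (SUP z\<in>ball 0 1. norm (\<phi> z))"
  have le_s: "norm (\<phi> z) \<le> s" if "z \<in> ball 0 1" for z
    unfolding s_def by (rule cSUP_upper[OF that bddA])
  show ?thesis unfolding s_def[symmetric]
  proof
    assume cc: "comp_compact \<phi>"
    define A where "A k = (\<lambda>n::nat. if n = k then (1::complex) else 0)" for k
    have Aw: "\<forall>k. A k \<in> wiener" by (simp add: A_def single_wiener)
    have AM: "\<exists>M. \<forall>k. wnorm (A k) \<le> M" by (intro exI[of _ 1]) (simp add: A_def single_wiener)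
    have "\<forall>k. \<exists>b. comp_image \<phi> (A k) b" using cm Aw unfolding comp_maps_wiener_def by blast
    then obtain B where B: "\<forall>k. comp_image \<phi> (A k) (B k)" by metis
    from cc have "\<exists>r c. strict_mono r \<and> c \<in> wiener \<and> (\<lambda>k. wnorm (\<lambda>n. B (r k) n - c n)) \<longlonglongrightarrow> 0"
      unfolding comp_compact_def using Aw AM B by blast
    then obtain r c where r: "strict_mono r" and cw: "c \<in> wiener"
      and lim: "(\<lambda>k. wnorm (\<lambda>n. B (r k) n - c n)) \<longlonglongrightarrow> 0" by blast
    have Bw: "B k \<in> wiener" for k using B by (simp add: comp_image_def)
    have wB: "wfun (B k) z = \<phi> z ^ k" if "z \<in> ball 0 1" for z k
      using B that by (simp add: comp_image_def A_def wfun_single)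
    have diffb: "norm (\<phi> z ^ r k - wfun c z) \<le> wnorm (\<lambda>n. B (r k) n - c n)" if z: "z \<in> ball 0 1" for z k
    proof -
      have nz: "norm z < 1" using z by simp
      have "wfun (\<lambda>n. B (r k) n - c n) z = \<phi> z ^ r k - wfun c z"
        using wfun_diff[OF Bw cw nz] wB[OF z] by simp
      then show ?thesis using wfun_bound[OF wiener_diff[OF Bw[of "r k"] cw] nz] by simp
    qed
    have c0: "wfun c z = 0" if z: "z \<in> ball 0 1" for z
    proof -
      have "norm (\<phi> z) < 1" using inball[OF z] by simp
      then have "(\<lambda>k. \<phi> z ^ k) \<longlonglongrightarrow> 0" by (rule LIMSEQ_power_zero)
      from LIMSEQ_subseq_LIMSEQ[OF this r] have t1: "(\<lambda>k. \<phi> z ^ r k) \<longlonglongrightarrow> 0"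
        by (simp add: comp_def)
      have t2: "(\<lambda>k. \<phi> z ^ r k - wfun c z) \<longlonglongrightarrow> 0"
        by (rule Lim_null_comparison[OF _ lim]) (use diffb[OF z] in auto)
      have "(\<lambda>k. \<phi> z ^ r k - (\<phi> z ^ r k - wfun c z)) \<longlonglongrightarrow> 0 - 0"
        by (rule tendsto_diff[OF t1 t2])
      then have "(\<lambda>k. wfun c z) \<longlonglongrightarrow> 0" by simp
      then show ?thesis by (simp add: LIMSEQ_const_iff)
    qed
    have "\<forall>\<^sub>F k in sequentially. wnorm (\<lambda>n. B (r k) n - c n) < 1/2 \<and> k \<ge> 1"
      using order_tendstoD(2)[OF lim, of "1/2"] eventually_ge_at_top[of 1]
      by (auto intro: eventually_conj)
    then obtain k where k: "wnorm (\<lambda>n. B (r k) n - c n) < 1/2" "k \<ge> 1"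
      unfolding eventually_sequentially by blast
    define m where "m = r k"
    have m1: "m > 0" using seq_suble[OF r, of k] k(2) by (simp add: m_def)
    have zle: "norm (\<phi> z) \<le> root m (1/2)" if z: "z \<in> ball 0 1" for z
    proof -
      have "norm (\<phi> z) ^ m = norm (\<phi> z ^ r k - wfun c z)"
        by (simp add: c0[OF z] m_def norm_power)
      also have "\<dots> \<le> 1/2" using diffb[OF z, of k] k(1) by simp
      finally have "root m (norm (\<phi> z) ^ m) \<le> root m (1/2)"
        using m1 by simp
      then show ?thesis using m1 by (simp add: real_root_power_cancel)
    qed
    have "s \<le> root m (1/2)" unfolding s_def
      by (rule cSUP_least) (use zle in auto)
    also have "root m (1/2) < root m 1" using m1 by simp
    finally show "s < 1" using m1 by simp
  next
    assume s1: "s < 1"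
    define e1 where "e1 = (\<lambda>n::nat. if n = 1 then (1::complex) else 0)"
    obtain p where p: "comp_image \<phi> e1 p"
      using cm single_wiener(1)[of 1] unfolding comp_maps_wiener_def e1_def by blast
    define P where "P = Abs_fps p"
    have LP: "L1 P" using p by (simp add: comp_image_def P_def wiener_L1)
    have evP: "eval_fps P z = \<phi> z" if "z \<in> ball 0 1" for z
      using p that by (simp add: comp_image_def P_def wfun_eval[symmetric] e1_def wfun_single)
    have Pn0: "(\<lambda>n. l1 (P ^ n)) \<longlonglongrightarrow> 0"
      by (rule powers_to_zero[OF LP _ s1]) (use evP le_s in auto)
    obtain K where K: "\<And>n. norm (l1 (P ^ n)) \<le> K"
      using convergent_imp_Bseq[OF convergentI[OF Pn0]] by (auto simp: Bseq_def)
    have S: "l1 (P ^ n) \<le> K" for n using K[of n] by simp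
    have LPn: "L1 (P ^ n)" for n using L1_power(1)[OF LP] .
    show "comp_compact \<phi>" unfolding comp_compact_def
    proof (intro allI impI)
      fix A B :: "nat \<Rightarrow> nat \<Rightarrow> complex"
      assume Aw': "\<forall>k. A k \<in> wiener" and "\<exists>M. \<forall>k. wnorm (A k) \<le> M"
        and B: "\<forall>k. comp_image \<phi> (A k) (B k)"
      then obtain M where M: "\<And>k. wnorm (A k) \<le> M" by blast
      have Aw: "A k \<in> wiener" for k using Aw' by blast
      have BT: "B k = T P (A k)" for k
      proof (rule wiener_unique)
        show "B k \<in> wiener" using B by (simp add: comp_image_def)
        show "T P (A k) \<in> wiener" by (rule T_props(1)[OF LP S Aw])
        fix z :: complex assume z: "z \<in> ball 0 1"
        show "wfun (B k) z = wfun (T P (A k)) z"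
          using B z T_props(4)[OF LP S Aw z] evP[OF z] by (simp add: comp_image_def)
      qed
      have cb: "norm (A k n) \<le> M" for k n using coord_le_wnorm[OF Aw] M order_trans by blast
      obtain r \<alpha> where r: "strict_mono r" and al: "\<And>n. (\<lambda>k. A (r k) n) \<longlonglongrightarrow> \<alpha> n"
        using diagonal_conv[of A M, OF cb] by blast
      have M0: "0 \<le> M" using wnorm_nonneg[OF Aw[of 0]] M[of 0] by linarith
      have psum: "(\<Sum>n<N. norm (\<alpha> n)) \<le> M" for N
      proof -
        have "(\<lambda>k. \<Sum>n<N. norm (A (r k) n)) \<longlonglongrightarrow> (\<Sum>n<N. norm (\<alpha> n))"
          by (intro tendsto_sum tendsto_norm al)
        moreover have "(\<Sum>n<N. norm (A (r k) n)) \<le> M" for k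
          using sum_le_suminf[of "\<lambda>n. norm (A (r k) n)" "{..<N}"] Aw[of "r k"] M[of "r k"]
          by (simp add: wiener_def wnorm_def)
        ultimately show ?thesis by (intro LIMSEQ_le_const2) auto
      qed
      have \<alpha>w: "\<alpha> \<in> wiener" unfolding wiener_def
        using summableI_nonneg_bounded[of "\<lambda>n. norm (\<alpha> n)" M] psum by simp
      have \<alpha>M: "wnorm \<alpha> \<le> M" unfolding wnorm_def
        by (rule suminf_le_const) (use \<alpha>w psum in \<open>auto simp: wiener_def\<close>)
      define c where "c = T P \<alpha>"
      have cw: "c \<in> wiener" unfolding c_def by (rule T_props(1)[OF LP S \<alpha>w])
      define d where "d k = (\<lambda>n. A (r k) n - \<alpha> n)" for k
      have dw: "d k \<in> wiener" for k unfolding d_def by (rule wiener_diff[OF Aw \<alpha>w])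
      have dM: "wnorm (d k) \<le> 2 * M" for k
        using wnorm_diff_le[OF Aw \<alpha>w, of "r k"] M[of "r k"] \<alpha>M unfolding d_def by linarith
      have eqd: "(\<lambda>n. B (r k) n - c n) = T P (d k)" for k
        unfolding BT c_def d_def by (rule ext, rule T_diff[OF LP S Aw \<alpha>w])
      define X where "X k = (\<Sum>n. norm (d k n) * l1 (P ^ n))" for k
      have wle: "wnorm (\<lambda>n. B (r k) n - c n) \<le> X k" for k
        unfolding eqd X_def by (rule T_props(3)[OF LP S dw])
      have X0: "X \<longlonglongrightarrow> 0"
      proof (rule LIMSEQ_I)
        fix e :: real assume e: "e > 0"
        define \<delta> where "\<delta> = e / (4 * (M + 1))"
        have \<delta>0: "\<delta> > 0" using e M0 by (simp add: \<delta>_def)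
        obtain N where N0: "\<And>n. n \<ge> N \<Longrightarrow> norm (l1 (P ^ n) - 0) < \<delta>"
          using LIMSEQ_D[OF Pn0 \<delta>0] by blast
        have N: "l1 (P ^ n) \<le> \<delta>" if "n \<ge> N" for n using N0[OF that] by simp
        have hd: "(\<lambda>k. \<Sum>n<N. norm (d k n) * l1 (P ^ n)) \<longlonglongrightarrow> (\<Sum>n<N. norm (\<alpha> n - \<alpha> n) * l1 (P ^ n))"
          unfolding d_def by (intro tendsto_intros al)
        then have hd0: "(\<lambda>k. \<Sum>n<N. norm (d k n) * l1 (P ^ n)) \<longlonglongrightarrow> 0" by simp
        have e2: "e / 2 > 0" using e by simp
        obtain k0 where k0: "\<And>k. k \<ge> k0 \<Longrightarrow> norm ((\<Sum>n<N. norm (d k n) * l1 (P ^ n)) - 0) < e/2"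
          using LIMSEQ_D[OF hd0 e2] by blast
        show "\<exists>no. \<forall>k\<ge>no. norm (X k - 0) < e"
        proof (intro exI allI impI)
          fix k assume k: "k \<ge> k0"
          have sX: "summable (\<lambda>n. norm (d k n) * l1 (P ^ n))" by (rule T_props(2)[OF LP S dw])
          have X0': "0 \<le> X k" unfolding X_def
            by (rule suminf_nonneg[OF sX]) (simp add: l1_nonneg[OF LPn])
          have sd: "summable (\<lambda>n. norm (d k n))" using dw[of k] by (simp add: wiener_def)
          have sdN: "summable (\<lambda>n. norm (d k (n + N)))" by (rule summable_ignore_initial_segment[OF sd])
          have "(\<Sum>n. norm (d k (n + N)) * l1 (P ^ (n + N))) \<le> (\<Sum>n. norm (d k (n + N)) * \<delta>)"
            by (rule suminf_le[OF _ summable_ignore_initial_segment[OF sX] summable_mult2[OF sdN]])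
               (simp add: mult_left_mono N)
          also have "\<dots> = (\<Sum>n. norm (d k (n + N))) * \<delta>" by (rule suminf_mult2[symmetric, OF sdN])
          also have "\<dots> \<le> wnorm (d k) * \<delta>"
          proof (rule mult_right_mono)
            show "(\<Sum>n. norm (d k (n + N))) \<le> wnorm (d k)"
              using suminf_split_initial_segment[OF sd, of N] sum_nonneg[of "{..<N}" "\<lambda>n. norm (d k n)"]
              by (simp add: wnorm_def)
          qed (use \<delta>0 in simp)
          also have "\<dots> \<le> 2 * M * \<delta>" using dM[of k] \<delta>0 by (simp add: mult_right_mono)
          also have "\<dots> < e / 2" using e M0 by (simp add: \<delta>_def field_simps)
          finally have tl: "(\<Sum>n. norm (d k (n + N)) * l1 (P ^ (n + N))) < e / 2" .
          have "X k = (\<Sum>n. norm (d k (n + N)) * l1 (P ^ (n + N))) + (\<Sum>n<N. norm (d k n) * l1 (P ^ n))"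
            unfolding X_def by (rule suminf_split_initial_segment[OF sX])
          also have "\<dots> < e / 2 + e / 2" using tl k0[OF k] by simp
          finally show "norm (X k - 0) < e" using X0' by simp
        qed
      qed
      have "(\<lambda>k. wnorm (\<lambda>n. B (r k) n - c n)) \<longlonglongrightarrow> 0"
      proof (rule tendsto_sandwich[OF _ _ tendsto_const X0])
        show "\<forall>\<^sub>F k in sequentially. 0 \<le> wnorm (\<lambda>n. B (r k) n - c n)"
          using wnorm_nonneg[OF wiener_diff[OF _ cw]] B by (auto simp: comp_image_def)
        show "\<forall>\<^sub>F k in sequentially. wnorm (\<lambda>n. B (r k) n - c n) \<le> X k" using wle by auto
      qed
      then show "\<exists>r c. strict_mono r \<and> c \<in> wiener \<and> (\<lambda>k. wnorm (\<lambda>n. B (r k) n - c n)) \<longlonglongrightarrow> 0"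
        using r cw by blast
    qed
  qed
qed


end
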